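(* Let $\mathbf{G}=(\mathcal{V},\mathcal{E})$ be a strongly connected directed graph on $\mathcal{V}=\{1,\dots,m\}$ with diameter $\delta(\mathbf{G})$. Suppose each node $i$ holds a real input $x_i$ and its identifier $i$, and the Top-$k$ consensus algorithm (described in the context) is run with $T$ rounds, where $T\geq \delta(\mathbf{G})$. Then at termination, for every pair of nodes $i,j\in\mathcal{V}$, $L_i=L_j=(x_{(1)},\dots,x_{(k)})$ and $\ell_i=\ell_j=(I_{(1)},\dots,I_{(k)})$.
   Context: Communication takes place over the directed graph $\mathbf{G}$ in synchronous, reliable rounds; $\mathcal{N}_i^{in}$ is the set of nodes $j$ with $(j,i)\in\mathcal{E}$ and $\mathcal{N}_i^{out}$ the set of nodes $j$ with $(i,j)\in\mathcal{E}$. The diameter $\delta(\mathbf{G})$ is the maximum over ordered pairs of nodes of the length of a shortest directed path between them. Order the input–identifier pairs as $x_{(1)}\ge x_{(2)}\ge\dots\ge x_{(m)}$ with corresponding identifiers $I_{(1)},\dots,I_{(m)}$, where ties are broken in favor of the larger identifier (if $x_{(j)}=x_{(j+1)}$ then $I_{(j)}>I_{(j+1)}$); $k\le m$ is a positive integer. Top-$k$ consensus algorithm: each node $i$ keeps two length-$k$ lists $L_i$ (values) and $\ell_i$ (identifiers), initialized to $L_i=(x_i,\perp,\dots,\perp)$, $\ell_i=(i,\perp,\dots,\perp)$, where $\perp$ denotes an empty entry. In each round $t=1,\dots,T$, every node $i$ sends $(L_i,\ell_i)$ to all out-neighbors, receives $(L_j,\ell_j)$ from all in-neighbors $j\in\mathcal{N}_i^{in}$,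 and replaces $(L_i,\ell_i)$ by the (up to) $k$ largest value–identifier pairs among those in its own lists and the received lists (duplicates of the same pair counted once), sorted in decreasing order of value with ties going to the larger identifier. *)

theory Defs
  imports Complex_Main "HOL-Library.Product_Lexorder"
begin

(* Value-identifier pairs (value, identifier) :: real \<times> nat.
   The lexicographic order of Product_Lexorder is exactly the paper's order:
   (v,i) > (w,j) iff v > w, or v = w and i > j. *)

definition topk :: "nat \<Rightarrow> (real \<times> nat) set \<Rightarrow> (real \<times> nat) list" where
  "topk k S = take k (rev (sorted_list_of_set S))"

(* the non-empty entries of node i's lists after t rounds *)
primrec topk_state :: "nat \<Rightarrow> (nat \<times> nat) set \<Rightarrow> (nat \<Rightarrow> real) \<Rightarrow> nat \<Rightarrow> nat \<Rightarrow> (real \<times> nat) list" where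
  "topk_state k E x 0 i = [(x i, i)]"
| "topk_state k E x (Suc t) i =
     topk k (set (topk_state k E x t i) \<union> (\<Union>j\<in>{j. (j, i) \<in> E}. set (topk_state k E x t j)))"

(* the length-k lists L_i (values) and \<ell>_i (identifiers), None = \<bottom> *)
definition L_list :: "nat \<Rightarrow> (nat \<times> nat) set \<Rightarrow> (nat \<Rightarrow> real) \<Rightarrow> nat \<Rightarrow> nat \<Rightarrow> real option list" where
  "L_list k E x t i = (let S = topk_state k E x t i in
      map (\<lambda>p. Some (fst p)) S @ replicate (k - length S) None)"

definition ell_list :: "nat \<Rightarrow> (nat \<times> nat) set \<Rightarrow> (nat \<Rightarrow> real) \<Rightarrow> nat \<Rightarrow> nat \<Rightarrow> nat option list" where
  "ell_list k E x t i = (let S = topk_state k E x t i in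
      map (\<lambda>p. Some (snd p)) S @ replicate (k - length S) None)"

(* all input-identifier pairs ordered decreasingly: the j-th entry (0-based) is (x_(j+1), I_(j+1)) *)
definition ranked :: "nat set \<Rightarrow> (nat \<Rightarrow> real) \<Rightarrow> (real \<times> nat) list" where
  "ranked V x = rev (sorted_list_of_set ((\<lambda>i. (x i, i)) ` V))"

definition graph_dist :: "(nat \<times> nat) set \<Rightarrow> nat \<Rightarrow> nat \<Rightarrow> nat" where
  "graph_dist E i j = (LEAST n. (i, j) \<in> E ^^ n)"

definition diameter :: "nat set \<Rightarrow> (nat \<times> nat) set \<Rightarrow> nat" where
  "diameter V E = Max {graph_dist E i j | i j. i \<in> V \<and> j \<in> V}"

definition strongly_connected :: "nat set \<Rightarrow> (nat \<times> nat) set \<Rightarrow> bool" where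
  "strongly_connected V E \<longleftrightarrow> (\<forall>i\<in>V. \<forall>j\<in>V. (i, j) \<in> (E \<inter> V \<times> V)\<^sup>*)"

end

theory Submission imports Defs begin

lemma gt_take:
  fixes ys :: "'a::linorder list"
  assumes s: "sorted_wrt (>) ys" and p: "p < length ys"
  shows "{b \<in> set ys. ys!p < b} = set (take p ys)"
proof (intro set_eqI iffI)
  fix b assume "b \<in> {b \<in> set ys. ys!p < b}"
  then obtain q where q: "q < length ys" "b = ys!q" "ys!p < ys!q" by (auto simp: in_set_conv_nth)
  have "q < p"
  proof (rule ccontr)
    assume "\<not> q < p"
    then have "q = p \<or> p < q" by auto
    then show False using sorted_wrt_nth_less[OF s, of p q] q p by auto
  qed
  then show "b \<in> set (take p ys)" using q by (auto simp: in_set_conv_nth)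
next
  fix b assume "b \<in> set (take p ys)"
  then obtain q where q: "q < p" "b = ys!q" using p by (auto simp: in_set_conv_nth)
  then show "b \<in> {b \<in> set ys. ys!p < b}" using sorted_wrt_nth_less[OF s, of q p] p by auto
qed

lemma topset_char:
  fixes S :: "'a::linorder set"
  assumes fin: "finite S"
  shows "set (take k (rev (sorted_list_of_set S))) = {a \<in> S. card {b \<in> S. a < b} < k}"
proof -
  define ys where "ys = rev (sorted_list_of_set S)"
  have s: "sorted_wrt (>) ys" unfolding ys_def sorted_wrt_rev using strict_sorted_list_of_set
    by (metis sorted_wrt_mono_rel)
  have d: "distinct ys" unfolding ys_def by simp
  have st: "set ys = S" unfolding ys_def using fin by simp
  have cardp: "card {b \<in> S. ys!p < b} = p" if "p < length ys" for p
    using gt_take[OF s that] st d that by (simp add: distinct_card)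
  show ?thesis unfolding ys_def[symmetric]
  proof (intro set_eqI iffI)
    fix a assume "a \<in> set (take k ys)"
    then obtain p where p: "p < k" "p < length ys" "a = ys!p" by (auto simp: in_set_conv_nth)
    then show "a \<in> {a \<in> S. card {b \<in> S. a < b} < k}" using cardp st by auto
  next
    fix a assume a: "a \<in> {a \<in> S. card {b \<in> S. a < b} < k}"
    then obtain p where p: "p < length ys" "a = ys!p" using st by (auto simp: in_set_conv_nth)
    then have "p < k" using cardp a by auto
    then show "a \<in> set (take k ys)" using p by (auto simp: in_set_conv_nth)
  qed
qed

lemma topk_set: "finite S \<Longrightarrow> set (topk k S) = {a \<in> S. card {b \<in> S. a < b} < k}"
  unfolding topk_def by (rule topset_char)

lemma topk_sorted: "sorted_wrt (>) (topk k S)"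
  unfolding topk_def
  by (rule sorted_wrt_take) (metis sorted_wrt_rev strict_sorted_list_of_set sorted_wrt_mono_rel)

lemma topk_card: "finite S \<Longrightarrow> card (set (topk k S)) = min k (card S)"
  unfolding topk_def by (simp add: distinct_card)

lemma topk_mono:
  assumes "finite A" "A' \<subseteq> A" "a \<in> A'" "a \<in> set (topk k A)"
  shows "a \<in> set (topk k A')"
proof -
  have "finite A'" using assms finite_subset by blast
  moreover have "card {b \<in> A'. a < b} \<le> card {b \<in> A. a < b}"
    using assms by (intro card_mono) auto
  ultimately show ?thesis using assms by (auto simp: topk_set)
qed

lemma sandwich:
  assumes fin: "finite A" and sub1: "set (topk k A) \<subseteq> C" and sub2: "C \<subseteq> A"
  shows "topk k C = topk k A"
proof -
  have finC: "finite C" using fin sub2 finite_subset by blast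
  have "set (topk k C) = set (topk k A)"
  proof (intro set_eqI iffI)
    fix a assume "a \<in> set (topk k A)"
    then show "a \<in> set (topk k C)" using topk_mono[OF fin sub2] sub1 by blast
  next
    fix a assume aC: "a \<in> set (topk k C)"
    then have a: "a \<in> C" "card {b \<in> C. a < b} < k" using finC by (auto simp: topk_set)
    show "a \<in> set (topk k A)"
    proof (rule ccontr)
      assume na: "a \<notin> set (topk k A)"
      then have ge: "card {b \<in> A. a < b} \<ge> k" using a sub2 fin by (auto simp: topk_set)
      have above: "set (topk k A) \<subseteq> {b \<in> C. a < b}"
      proof
        fix c assume c: "c \<in> set (topk k A)"
        then have c2: "c \<in> A" "card {b \<in> A. c < b} < k" using fin by (auto simp: topk_set)
        have "a < c"
        proof (rule ccontr)
          assume "\<not> a < c"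
          then have "c < a" using c na by (cases "c = a") auto
          then have "{b \<in> A. a < b} \<subseteq> {b \<in> A. c < b}" by auto
          then have "card {b \<in> A. a < b} \<le> card {b \<in> A. c < b}" using fin by (intro card_mono) auto
          then show False using ge c2 by auto
        qed
        then show "c \<in> {b \<in> C. a < b}" using c sub1 by auto
      qed
      have "k \<le> card A"
        using ge card_mono[OF fin, of "{b \<in> A. a < b}"] by auto
      then have "card (set (topk k A)) = k" using topk_card[OF fin] by simp
      moreover have "card (set (topk k A)) \<le> card {b \<in> C. a < b}"
        using above finC by (intro card_mono) auto
      ultimately show False using a by simp
    qed
  qed
  moreover have "sorted_wrt (<) (rev (topk k C))" "sorted_wrt (<) (rev (topk k A))"
    using topk_sorted[of k C] topk_sorted[of k A] by (simp_all add: sorted_wrt_rev)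
  ultimately have "rev (topk k C) = rev (topk k A)"
    by (intro sorted_distinct_set_unique) (simp_all add: strict_sorted_iff)
  then show ?thesis by simp
qed


primrec reach :: "(nat \<times> nat) set \<Rightarrow> nat \<Rightarrow> nat \<Rightarrow> nat set" where
  "reach E 0 i = {i}"
| "reach E (Suc t) i = reach E t i \<union> (\<Union>j\<in>{j. (j, i) \<in> E}. reach E t j)"

lemma reach_finite: "finite E \<Longrightarrow> finite (reach E t i)"
proof (induction t arbitrary: i)
  case 0 then show ?case by simp
next
  case (Suc t)
  have "finite {j. (j, i) \<in> E}"
    using finite_subset[of "{j. (j, i) \<in> E}" "fst ` E"] Suc.prems by force
  then show ?case using Suc by simp
qed

lemma reach_self: "i \<in> reach E t i"
  by (induction t) auto

lemma reach_sub: "E \<subseteq> V \<times> V \<Longrightarrow> i \<in> V \<Longrightarrow> reach E t i \<subseteq> V"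
proof (induction t arbitrary: i)
  case 0 then show ?case by simp
next
  case (Suc t) then show ?case by auto
qed

lemma reach_path: "(j, i) \<in> E ^^ n \<Longrightarrow> n \<le> t \<Longrightarrow> j \<in> reach E t i"
proof (induction n arbitrary: i t)
  case 0 then show ?case by (simp add: reach_self)
next
  case (Suc n)
  then obtain w where w: "(j, w) \<in> E ^^ n" "(w, i) \<in> E" by auto
  obtain t' where t': "t = Suc t'" "n \<le> t'" using Suc.prems by (cases t) auto
  have "j \<in> reach E t' w" using Suc.IH[OF w(1) t'(2)] .
  then show ?case using t' w by auto
qed

lemma state_eq:
  assumes fE: "finite E" and k: "1 \<le> k"
  shows "topk_state k E x t i = topk k ((\<lambda>j. (x j, j)) ` reach E t i)"
proof (induction t arbitrary: i)
  case 0
  have "sorted_list_of_set {(x i, i)} = [(x i, i)]" by simp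
  then show ?case using k by (simp add: topk_def)
next
  case (Suc t)
  let ?P = "\<lambda>S. (\<lambda>j. (x j, j)) ` S"
  let ?C = "set (topk k (?P (reach E t i))) \<union> (\<Union>j\<in>{j. (j, i) \<in> E}. set (topk k (?P (reach E t j))))"
  let ?A = "?P (reach E (Suc t) i)"
  have finA: "finite ?A" using reach_finite[OF fE] by blast
  have eq: "topk_state k E x (Suc t) i = topk k ?C" using Suc.IH by simp
  have s2: "?C \<subseteq> ?A"
  proof -
    have "set (topk k S) \<subseteq> S" if "finite S" for S :: "(real \<times> nat) set"
      using that by (auto simp: topk_set)
    then have sub: "set (topk k (?P (reach E t j))) \<subseteq> ?P (reach E t j)" for j
      using reach_finite[OF fE] by blast
    show ?thesis
    proof (intro Un_least UN_least)
      show "set (topk k (?P (reach E t i))) \<subseteq> ?A"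
        using sub[of i] by (rule subset_trans) auto
      fix j assume "j \<in> {j. (j, i) \<in> E}"
      then show "set (topk k (?P (reach E t j))) \<subseteq> ?A"
        using sub[of j] by (intro subset_trans[OF sub[of j]]) auto
    qed
  qed
  have s1: "set (topk k ?A) \<subseteq> ?C"
  proof
    fix a assume a: "a \<in> set (topk k ?A)"
    then have "a \<in> ?A" using finA by (auto simp: topk_set)
    then consider "a \<in> ?P (reach E t i)" | j where "(j, i) \<in> E" "a \<in> ?P (reach E t j)"
      by auto
    then show "a \<in> ?C"
    proof cases
      case 1
      then have "a \<in> set (topk k (?P (reach E t i)))"
        by (intro topk_mono[OF finA _ _ a]) auto
      then show ?thesis by blast
    next
      case 2
      then have "a \<in> set (topk k (?P (reach E t j)))"
        by (intro topk_mono[OF finA _ _ a]) auto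
      then show ?thesis using 2 by blast
    qed
  qed
  show ?case using eq sandwich[OF finA s1 s2] by simp
qed


theorem theorem1:
  fixes m k T :: nat and E :: "(nat \<times> nat) set" and x :: "nat \<Rightarrow> real"
  assumes "m \<ge> 1"
    and "E \<subseteq> {1..m} \<times> {1..m}"
    and "strongly_connected {1..m} E"
    and "1 \<le> k" and "k \<le> m"
    and "T \<ge> diameter {1..m} E"
  shows "\<forall>i\<in>{1..m}. \<forall>j\<in>{1..m}.
           L_list k E x T i = L_list k E x T j \<and>
           ell_list k E x T i = ell_list k E x T j \<and>
           L_list k E x T i = map (\<lambda>p. Some (fst p)) (take k (ranked {1..m} x)) \<and>
           ell_list k E x T i = map (\<lambda>p. Some (snd p)) (take k (ranked {1..m} x))"
proof -
  let ?V = "{1..m::nat}"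
  have fE: "finite E" using assms(2) finite_subset by blast
  have finD: "finite {graph_dist E i j | i j. i \<in> ?V \<and> j \<in> ?V}"
  proof -
    have "{graph_dist E i j | i j. i \<in> ?V \<and> j \<in> ?V} = (\<lambda>(i, j). graph_dist E i j) ` (?V \<times> ?V)"
      by (auto simp: image_iff) (metis atLeastAtMost_iff)
    then show ?thesis by simp
  qed
  have reachV: "reach E T i = ?V" if iV: "i \<in> ?V" for i
  proof
    show "reach E T i \<subseteq> ?V" using reach_sub[OF assms(2) iV] .
    show "?V \<subseteq> reach E T i"
    proof
      fix j assume jV: "j \<in> ?V"
      have "(j, i) \<in> (E \<inter> ?V \<times> ?V)\<^sup>*" using assms(3) jV iV unfolding strongly_connected_def by blast
      then have "(j, i) \<in> E\<^sup>*" using rtrancl_mono[of "E \<inter> ?V \<times> ?V" E] by blast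
      then have ex: "\<exists>n. (j, i) \<in> E ^^ n" using rtrancl_power by blast
      have p: "(j, i) \<in> E ^^ graph_dist E j i" unfolding graph_dist_def using LeastI_ex[OF ex] .
      have "graph_dist E j i \<le> diameter ?V E" unfolding diameter_def
        using finD jV iV by (intro Max_ge) auto
      then show "j \<in> reach E T i" using reach_path[OF p] assms(6) by simp
    qed
  qed
  have injP: "inj_on (\<lambda>j. (x j, j)) ?V" by (rule inj_onI) auto
  have lenr: "length (ranked ?V x) = m"
    unfolding ranked_def using card_image[OF injP] by simp
  have st: "topk_state k E x T i = take k (ranked ?V x)" if "i \<in> ?V" for i
    using state_eq[OF fE assms(4), of x T i] reachV[OF that] unfolding topk_def ranked_def by simp
  have len: "length (take k (ranked ?V x)) = k" using lenr assms(5) by simp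
  show ?thesis
    unfolding L_list_def ell_list_def Let_def using st len by simp
qed

end
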